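(* Let $r, s, m, n$ be positive integers such that $\frac{r+s}{\gcd(r,s)}$ divides $m$. If $f: V(H_{n,m}) \rightarrow \{-r,s\}$ is a function with $f(V(H_{n,m})) = 0$, then $H_{n,m}$ can be decomposed into $n$ vertex-disjoint directed $m$-paths $P_1, \ldots, P_n$ with $f(V(P_i))=0$ for all $1\le i\le n$.
   Context: For a set $Y$ of vertices, $f(Y)=\sum_{y\in Y}f(y)$. $H_{n,m}$ is the directed graph whose vertex set is the disjoint union of $V_1,\dots,V_m$ with $|V_i|=n$, and whose arc set is $\bigcup_{i=1}^{m-1}\{(v,w): v\in V_i, w\in V_{i+1}\}$. A directed $m$-path is a directed path with $m$ vertices. *)

theory Defs
  imports Main
begin

text \<open>The digraph H_{n,m}: vertex (i,j) is the j-th vertex of layer V_{i+1},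
  for i < m (layer index, 0-based) and j < n.\<close>

definition H_verts :: "nat \<Rightarrow> nat \<Rightarrow> (nat \<times> nat) set" where
  "H_verts n m = {0..<m} \<times> {0..<n}"

definition H_arc :: "nat \<Rightarrow> nat \<Rightarrow> (nat \<times> nat) \<Rightarrow> (nat \<times> nat) \<Rightarrow> bool" where
  "H_arc n m v w \<longleftrightarrow> v \<in> H_verts n m \<and> w \<in> H_verts n m \<and> fst w = fst v + 1"

definition H_dipath :: "nat \<Rightarrow> nat \<Rightarrow> nat \<Rightarrow> (nat \<times> nat) list \<Rightarrow> bool" where
  "H_dipath n m k p \<longleftrightarrow> length p = k \<and> distinct p \<and> set p \<subseteq> H_verts n m \<and>
     (\<forall>i. i + 1 < length p \<longrightarrow> H_arc n m (p ! i) (p ! (i + 1)))"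

end

theory Submission
  imports Defs
begin

lemma mod_inj_interval:
  fixes x y n :: nat
  assumes "x mod n = y mod n" "x < y + n" "y < x + n"
  shows "x = y"
proof (rule ccontr)
  assume ne: "x \<noteq> y"
  show False
  proof (cases "x \<le> y")
    case True
    then have "n dvd y - x" by (simp add: mod_eq_dvd_iff_nat[OF True, symmetric] assms(1))
    moreover have "y - x < n" "0 < y - x" using assms True ne by linarith+
    ultimately show False using nat_dvd_not_less by blast
  next
    case False
    then have F: "y \<le> x" by simp
    then have "n dvd x - y" by (simp add: mod_eq_dvd_iff_nat[OF F, symmetric] assms(1))
    moreover have "x - y < n" "0 < x - y" using assms False ne by linarith+
    ultimately show False using nat_dvd_not_less by blast
  qed
qed

lemma perm_exists:
  assumes "finite U" "A \<subseteq> U" "B \<subseteq> U" "card A = card B"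
  shows "\<exists>\<sigma>. bij_betw \<sigma> U U \<and> (\<forall>x\<in>U. \<sigma> x \<in> B \<longleftrightarrow> x \<in> A)"
proof -
  have fA: "finite A" "finite B" using assms finite_subset by auto
  obtain g where g: "bij_betw g A B" using finite_same_card_bij fA assms(4) by blast
  have "card (U - A) = card (U - B)" using assms fA by (simp add: card_Diff_subset)
  then obtain h where h: "bij_betw h (U - A) (U - B)"
    using finite_same_card_bij assms(1) by (metis finite_Diff)
  define \<sigma> where "\<sigma> x = (if x \<in> A then g x else h x)" for x
  have b1: "bij_betw \<sigma> A B" using g by (rule bij_betw_cong[THEN iffD1, rotated]) (simp add: \<sigma>_def)
  have b2: "bij_betw \<sigma> (U - A) (U - B)" using h by (rule bij_betw_cong[THEN iffD1, rotated]) (simp add: \<sigma>_def)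
  have "bij_betw \<sigma> (A \<union> (U - A)) (B \<union> (U - B))"
    by (rule bij_betw_combine[OF b1 b2]) auto
  moreover have "A \<union> (U - A) = U" "B \<union> (U - B) = U" using assms by auto
  ultimately have bU: "bij_betw \<sigma> U U" by simp
  have "\<forall>x\<in>U. \<sigma> x \<in> B \<longleftrightarrow> x \<in> A"
  proof
    fix x assume "x \<in> U"
    show "\<sigma> x \<in> B \<longleftrightarrow> x \<in> A"
    proof (cases "x \<in> A")
      case True then show ?thesis using b1 bij_betwE by blast
    next
      case False then have "x \<in> U - A" using \<open>x\<in>U\<close> by simp
      then have "\<sigma> x \<in> U - B" using b2 bij_betwE by blast
      then show ?thesis using False by simp
    qed
  qed
  then show ?thesis using bU by blast
qed

lemma cnt_split:
  fixes a b c :: nat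
  assumes "a \<le> b" "b \<le> c"
  shows "card {x. a \<le> x \<and> x < c \<and> P x} = card {x. a \<le> x \<and> x < b \<and> P x} + card {x. b \<le> x \<and> x < c \<and> P x}"
proof -
  have "{x. a \<le> x \<and> x < c \<and> P x} = {x. a \<le> x \<and> x < b \<and> P x} \<union> {x. b \<le> x \<and> x < c \<and> P x}"
    using assms by auto
  moreover have "finite {x. a \<le> x \<and> x < b \<and> P x}" "finite {x. b \<le> x \<and> x < c \<and> P x}" by auto
  ultimately show ?thesis by (simp add: card_Un_disjoint disjoint_iff)
qed

lemma cnt_small:
  fixes a b n j :: nat
  assumes "b \<le> a + n"
  shows "card {x. a \<le> x \<and> x < b \<and> x mod n = j} = (if \<exists>x. a \<le> x \<and> x < b \<and> x mod n = j then 1 else 0)"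
proof (cases "\<exists>x. a \<le> x \<and> x < b \<and> x mod n = j")
  case True
  then obtain x0 where x0: "a \<le> x0" "x0 < b" "x0 mod n = j" by blast
  have "{x. a \<le> x \<and> x < b \<and> x mod n = j} = {x0}"
  proof safe
    fix x assume h: "a \<le> x" "x < b" "j = x mod n"
    then have e: "x mod n = x0 mod n" using x0 by simp
    have "x < x0 + n" "x0 < x + n" using h x0 assms by auto
    then show "x = x0" using mod_inj_interval[OF e] by blast
  qed (use x0 in auto)
  then show ?thesis using True by simp
next
  case False
  then have "{x. a \<le> x \<and> x < b \<and> x mod n = j} = {}" by auto
  then show ?thesis unfolding if_not_P[OF False] by simp
qed

lemma cnt_total:
  fixes n A j :: nat
  assumes "j < n"
  shows "card {x. x < n * A \<and> x mod n = j} = A"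
proof -
  have "{x. x < n * A \<and> x mod n = j} = (\<lambda>q. q * n + j) ` {..<A}"
  proof safe
    fix x assume x: "x < n * A" "j = x mod n"
    have "x div n < A" using x by (metis div_less_iff_less_mult mult.commute not_gr0 not_less0 mult_0)
    moreover have "x = x div n * n + x mod n" by simp
    ultimately show "x \<in> (\<lambda>q. q * n + x mod n) ` {..<A}" by blast
  next
    fix q assume q: "q < A"
    have "q * n + j < q * n + n" using assms by simp
    also have "\<dots> = (q+1) * n" by simp
    also have "\<dots> \<le> A * n" using q by (intro mult_right_mono) auto
    finally show "q * n + j < n * A" by (simp add: mult.commute)
    show "(q * n + j) mod n = j" using assms by simp
  qed
  moreover have "inj_on (\<lambda>q. q * n + j) {..<A}" using assms by (intro inj_onI) auto
  ultimately show ?thesis by (simp add: card_image)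
qed

lemma tele:
  fixes c :: "nat \<Rightarrow> nat" and n j :: nat
  assumes "\<forall>i. c i \<le> n"
  shows "(\<Sum>i<m. (if \<exists>x. (\<Sum>l<i. c l) \<le> x \<and> x < (\<Sum>l<i. c l) + c i \<and> x mod n = j then 1 else 0))
        = card {x. x < (\<Sum>i<m. c i) \<and> x mod n = j}"
proof (induction m)
  case 0 then show ?case by simp
next
  case (Suc m)
  let ?o = "\<Sum>l<m. c l"
  have "card {x. x < ?o + c m \<and> x mod n = j} = card {x. 0 \<le> x \<and> x < ?o + c m \<and> x mod n = j}" by simp
  also have "\<dots> = card {x. 0 \<le> x \<and> x < ?o \<and> x mod n = j} + card {x. ?o \<le> x \<and> x < ?o + c m \<and> x mod n = j}"
    by (rule cnt_split) auto
  also have "card {x. ?o \<le> x \<and> x < ?o + c m \<and> x mod n = j} = (if \<exists>x. ?o \<le> x \<and> x < ?o + c m \<and> x mod n = j then 1 else 0)"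
    using assms by (intro cnt_small) auto
  finally show ?case using Suc by simp
qed


theorem corollary4p4:
  fixes r s m n :: nat and f :: "nat \<times> nat \<Rightarrow> int"
  assumes "r > 0" "s > 0" "m > 0" "n > 0"
    and "((r + s) div gcd r s) dvd m"
    and "\<forall>v \<in> H_verts n m. f v = - int r \<or> f v = int s"
    and "(\<Sum>v \<in> H_verts n m. f v) = 0"
  shows "\<exists>P :: nat \<Rightarrow> (nat \<times> nat) list.
           (\<forall>i < n. H_dipath n m m (P i)) \<and>
           (\<forall>i < n. \<forall>j < n. i \<noteq> j \<longrightarrow> set (P i) \<inter> set (P j) = {}) \<and>
           (\<Union>i < n. set (P i)) = H_verts n m \<and>
           (\<forall>i < n. (\<Sum>v \<in> set (P i). f v) = 0)"
proof -
  define d where "d = gcd r s"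
  have d0: "d > 0" using assms(1) by (simp add: d_def)
  obtain r' where r': "r = d * r'" using gcd_dvd1[of r s, unfolded dvd_def] unfolding d_def by blast
  obtain s' where s': "s = d * s'" using gcd_dvd2[of r s, unfolded dvd_def] unfolding d_def by blast
  have "(r + s) div d = r' + s'" using d0 r' s' by (simp add: distrib_left[symmetric])
  then obtain k where k: "m = (r' + s') * k" using assms(5) unfolding d_def[symmetric] dvd_def by auto
  define A where "A = k * s'"
  have key: "(r + s) * A = m * s" unfolding A_def k r' s' by (simp add: algebra_simps)
  have rs0: "r + s > 0" using assms(1) by simp
  have fv: "f (i, j) = - int r \<or> f (i, j) = int s" if "i < m" "j < n" for i j
    using assms(6) that unfolding H_verts_def by auto
  have rneq: "- int r \<noteq> int s" using assms(1) by simp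
  define Neg where "Neg i = {j \<in> {..<n}. f (i, j) = - int r}" for i
  define c where "c i = card (Neg i)" for i
  have cn: "\<forall>i. c i \<le> n" unfolding c_def Neg_def
    by (metis (no_types, lifting) card_lessThan card_mono finite_lessThan mem_Collect_eq subsetI)
  have layer: "(\<Sum>j<n. f (i, j)) = int n * int s - int (r + s) * int (c i)" if "i < m" for i
  proof -
    have "(\<Sum>j<n. f (i, j)) = (\<Sum>j<n. int s - int (r + s) * (if j \<in> Neg i then 1 else 0))"
    proof (rule sum.cong)
      fix j assume "j \<in> {..<n}"
      then show "f (i, j) = int s - int (r + s) * (if j \<in> Neg i then 1 else 0)"
        using fv[OF that, of j] rneq unfolding Neg_def by auto
    qed simp
    also have "\<dots> = int n * int s - int (r + s) * (\<Sum>j<n. (if j \<in> Neg i then 1 else 0))"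
      by (simp add: sum_subtractf sum_distrib_left)
    also have "(\<Sum>j<n. (if j \<in> Neg i then 1 else 0 :: int)) = int (c i)"
    proof -
      have "(\<Sum>j<n. (if j \<in> Neg i then 1 else 0 :: int)) = of_nat (card ({..<n} \<inter> Neg i))"
        by (simp add: sum.If_cases)
      also have "{..<n} \<inter> Neg i = Neg i" unfolding Neg_def by auto
      finally show ?thesis unfolding c_def .
    qed
    finally show ?thesis .
  qed
  define N where "N = (\<Sum>i<m. c i)"
  have "0 = (\<Sum>v \<in> {0..<m} \<times> {0..<n}. f v)" using assms(7) unfolding H_verts_def by simp
  also have "\<dots> = (\<Sum>i<m. \<Sum>j<n. f (i, j))"
    by (simp add: sum.cartesian_product atLeast0LessThan)
  also have "\<dots> = (\<Sum>i<m. int n * int s - int (r + s) * int (c i))"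
    using layer by simp
  also have "\<dots> = int m * int n * int s - int (r + s) * int N"
    unfolding N_def by (simp add: sum_subtractf sum_distrib_left)
  finally have "(r + s) * N = m * n * s"
    by (metis (mono_tags, opaque_lifting) diff_eq_diff_eq diff_self of_nat_eq_iff of_nat_mult)
  also have "\<dots> = n * (m * s)" by (simp add: ac_simps)
  also have "\<dots> = (r + s) * (n * A)" unfolding key[symmetric] by (simp add: ac_simps)
  finally have NA: "N = n * A" using rs0 by auto
  define ofs where "ofs i = (\<Sum>l<i. c l)" for i
  define T where "T i j \<longleftrightarrow> (\<exists>x. ofs i \<le> x \<and> x < ofs i + c i \<and> x mod n = j)" for i j
  define TS where "TS i = {j \<in> {..<n}. T i j}" for i
  have TSimg: "TS i = (\<lambda>x. x mod n) ` {ofs i..<ofs i + c i}" for i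
    unfolding TS_def T_def using assms(4) by auto
  have cardTS: "card (TS i) = c i" for i
  proof -
    have "inj_on (\<lambda>x. x mod n) {ofs i..<ofs i + c i}"
    proof (rule inj_onI)
      fix x y assume xy: "x \<in> {ofs i..<ofs i + c i}" "y \<in> {ofs i..<ofs i + c i}" and e: "x mod n = y mod n"
      have "c i \<le> n" using cn by blast
      then have "x < y + n" "y < x + n" using xy by auto
      then show "x = y" using mod_inj_interval[OF e] by blast
    qed
    then show ?thesis unfolding TSimg by (simp add: card_image)
  qed
  have "\<forall>i. \<exists>\<sigma>. bij_betw \<sigma> {..<n} {..<n} \<and> (\<forall>x\<in>{..<n}. \<sigma> x \<in> Neg i \<longleftrightarrow> x \<in> TS i)"
  proof
    fix i
    have "TS i \<subseteq> {..<n}" "Neg i \<subseteq> {..<n}" "card (TS i) = card (Neg i)"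
      using cardTS[of i] unfolding TS_def Neg_def c_def by auto
    then show "\<exists>\<sigma>. bij_betw \<sigma> {..<n} {..<n} \<and> (\<forall>x\<in>{..<n}. \<sigma> x \<in> Neg i \<longleftrightarrow> x \<in> TS i)"
      using perm_exists[of "{..<n}" "TS i" "Neg i"] by blast
  qed
  then obtain \<sigma> where \<sigma>: "\<And>i. bij_betw (\<sigma> i) {..<n} {..<n}"
    "\<And>i x. x < n \<Longrightarrow> \<sigma> i x \<in> Neg i \<longleftrightarrow> T i x"
    unfolding TS_def by (metis lessThan_iff mem_Collect_eq)
  have \<sigma>n: "\<sigma> i j < n" if "j < n" for i j using \<sigma>(1)[of i] that bij_betwE by fastforce
  have \<sigma>inj: "\<sigma> i j = \<sigma> i j' \<Longrightarrow> j < n \<Longrightarrow> j' < n \<Longrightarrow> j = j'" for i j j'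
    using \<sigma>(1)[of i] by (auto simp: bij_betw_def inj_on_def)
  define P where "P j = map (\<lambda>i. (i, \<sigma> i j)) [0..<m]" for j
  have setP: "set (P j) = (\<lambda>i. (i, \<sigma> i j)) ` {..<m}" for j unfolding P_def by auto
  have path: "H_dipath n m m (P j)" if "j < n" for j
    unfolding H_dipath_def H_arc_def H_verts_def P_def
    using \<sigma>n[OF that] by (auto simp: distinct_map inj_on_def)
  have disj: "set (P j) \<inter> set (P j') = {}" if "j < n" "j' < n" "j \<noteq> j'" for j j'
    unfolding setP using \<sigma>inj that by auto
  have cover: "(\<Union>j < n. set (P j)) = H_verts n m"
  proof
    show "(\<Union>j < n. set (P j)) \<subseteq> H_verts n m" unfolding setP H_verts_def using \<sigma>n by auto
    show "H_verts n m \<subseteq> (\<Union>j < n. set (P j))"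
    proof
      fix v assume "v \<in> H_verts n m"
      then obtain i y where v: "v = (i, y)" "i < m" "y < n" unfolding H_verts_def by auto
      have "y \<in> \<sigma> i ` {..<n}" using v(3) \<sigma>(1)[of i] unfolding bij_betw_def by simp
      then obtain j where "j < n" "\<sigma> i j = y" by auto
      then show "v \<in> (\<Union>j < n. set (P j))" unfolding setP using v by force
    qed
  qed
  have sums: "(\<Sum>v \<in> set (P j). f v) = 0" if "j < n" for j
  proof -
    have "(\<Sum>v \<in> set (P j). f v) = (\<Sum>i<m. f (i, \<sigma> i j))"
      unfolding setP by (subst sum.reindex) (auto simp: inj_on_def)
    also have "\<dots> = (\<Sum>i<m. int s - int (r + s) * (if T i j then 1 else 0))"
    proof (rule sum.cong)
      fix i assume i: "i \<in> {..<m}"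
      have "\<sigma> i j \<in> Neg i \<longleftrightarrow> T i j" using \<sigma>(2) that by blast
      then show "f (i, \<sigma> i j) = int s - int (r + s) * (if T i j then 1 else 0)"
        using fv[of i "\<sigma> i j"] i \<sigma>n[OF that] rneq unfolding Neg_def by auto
    qed simp
    also have "\<dots> = int m * int s - int (r + s) * (\<Sum>i<m. (if T i j then 1 else 0 :: int))"
      by (simp add: sum_subtractf sum_distrib_left)
    also have "(\<Sum>i<m. (if T i j then 1 else 0 :: int)) = int (\<Sum>i<m. (if T i j then 1 else 0 :: nat))"
      by (induction m) auto
    also have "(\<Sum>i<m. (if T i j then 1 else 0 :: nat)) = card {x. x < N \<and> x mod n = j}"
      unfolding T_def ofs_def N_def by (rule tele[OF cn])
    also have "\<dots> = A" unfolding NA by (rule cnt_total[OF that])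
    finally show ?thesis using key by (metis diff_self of_nat_mult)
  qed
  show ?thesis
    by (rule exI[of _ P]) (use path disj cover sums in blast)
qed


end
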